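(* Let $Y$ be a random simplicial complex on $[n]=\{0,\dots,n\}$ drawn from the lower model in the medial regime, with constants $0<p\le P<1$ such that $p\le p_\sigma\le P$ for all $\sigma$. Then $Y$ is simply connected (connected with trivial fundamental group) asymptotically almost surely, i.e. with probability tending to $1$ as $n\to\infty$.
   Context: Lower model: each non-empty proper subset $\sigma\subsetneq[n]$ is included independently with probability $p_\sigma$ into a random hypergraph $X$, and $Y$ is the largest simplicial complex contained in $X$ ($\sigma\in Y$ iff every non-empty $\tau\subseteq\sigma$ lies in $X$). Medial regime: $p,P\in(0,1)$ are independent of $n$. *)

theory Defs
  imports "HOL-Analysis.Analysis" "HOL-Probability.Probability"
begin

definition lower_faces :: "nat \<Rightarrow> nat set set" where
  "lower_faces n = {\<sigma>. \<sigma> \<noteq> {} \<and> \<sigma> \<subset> {0..n}}"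

text \<open>The random hypergraph X: each potential face sigma is included independently
  with probability q sigma (a hypergraph is represented by its indicator function;
  sets outside lower_faces n are never included).\<close>
definition lower_hypergraph :: "nat \<Rightarrow> (nat set \<Rightarrow> real) \<Rightarrow> (nat set \<Rightarrow> bool) pmf" where
  "lower_hypergraph n q = Pi_pmf (lower_faces n) False (\<lambda>\<sigma>. bernoulli_pmf (q \<sigma>))"

text \<open>The largest simplicial complex contained in X.\<close>
definition lower_complex :: "(nat set \<Rightarrow> bool) \<Rightarrow> nat set set" where
  "lower_complex X = {\<sigma>. \<sigma> \<noteq> {} \<and> (\<forall>\<tau>. \<tau> \<noteq> {} \<and> \<tau> \<subseteq> \<sigma> \<longrightarrow> X \<tau>)}"

text \<open>Geometric realization: vertex v is sent to the standard basis vector e_v in the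
  normed space of bounded functions nat => real (sup norm); a face is sent to the
  convex hull of its vertices.\<close>
definition vertex_pt :: "nat \<Rightarrow> (nat \<Rightarrow>\<^sub>C real)" where
  "vertex_pt v = Bcontfun (\<lambda>i. if i = v then 1 else 0)"

definition realization :: "nat set set \<Rightarrow> (nat \<Rightarrow>\<^sub>C real) set" where
  "realization K = (\<Union>\<sigma>\<in>K. convex hull (vertex_pt ` \<sigma>))"

end

theory Submission
  imports Defs
begin

lemma vertex_pt_apply [simp]: "apply_bcontfun (vertex_pt v) i = (if i = v then 1 else 0)"
proof -
  have "(\<lambda>i::nat. if i = v then 1 else (0::real)) \<in> bcontfun"
    by (rule bcontfun_normI) auto
  then show ?thesis unfolding vertex_pt_def by (simp add: Bcontfun_inverse)
qed

lemma conv_coord_zero: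
  assumes "x \<in> convex hull (vertex_pt ` \<sigma>)" "v \<notin> \<sigma>"
  shows "apply_bcontfun x v = 0"
proof -
  have "convex {f :: nat \<Rightarrow>\<^sub>C real. apply_bcontfun f v = 0}"
    by (auto simp: convex_def)
  moreover have "vertex_pt ` \<sigma> \<subseteq> {f. apply_bcontfun f v = 0}" using assms(2) by auto
  ultimately show ?thesis using assms(1) hull_minimal by blast
qed

lemma conv_coord_nonneg:
  assumes "x \<in> convex hull (vertex_pt ` \<sigma>)"
  shows "apply_bcontfun x v \<ge> 0"
proof -
  have "convex {f :: nat \<Rightarrow>\<^sub>C real. apply_bcontfun f v \<ge> 0}"
    by (auto simp: convex_def)
  moreover have "vertex_pt ` \<sigma> \<subseteq> {f. apply_bcontfun f v \<ge> 0}" by auto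
  ultimately show ?thesis using assms(1) hull_minimal by blast
qed

lemma conv_coord_sum:
  assumes "x \<in> convex hull (vertex_pt ` \<sigma>)" "finite \<sigma>"
  shows "(\<Sum>u\<in>\<sigma>. apply_bcontfun x u) = 1"
proof -
  have "convex {f :: nat \<Rightarrow>\<^sub>C real. (\<Sum>u\<in>\<sigma>. apply_bcontfun f u) = 1}"
    by (auto simp: convex_def sum.distrib sum_distrib_left[symmetric])
  moreover have "vertex_pt ` \<sigma> \<subseteq> {f. (\<Sum>u\<in>\<sigma>. apply_bcontfun f u) = 1}"
    using assms(2) by (auto simp: sum.delta)
  ultimately show ?thesis using assms(1) hull_minimal by blast
qed

lemma coord_dist: "\<bar>apply_bcontfun x v - apply_bcontfun y v\<bar> \<le> dist x (y :: nat \<Rightarrow>\<^sub>C real)"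
  using dist_bounded[of x v y] by (simp add: dist_real_def)

lemma hp_star:
  fixes S T :: "'a::real_normed_vector set"
  assumes "T \<subseteq> S" "starlike T" "path p" "path q" "path_image p \<subseteq> T" "path_image q \<subseteq> T"
    "pathstart q = pathstart p" "pathfinish q = pathfinish p"
  shows "homotopic_paths S p q"
proof -
  have "simply_connected T" using assms(2) by (rule starlike_imp_simply_connected)
  then have "homotopic_paths T p q"
    using assms(3-8) unfolding simply_connected_eq_homotopic_paths by blast
  then show ?thesis using assms(1) homotopic_paths_subset by blast
qed

lemma hp_assoc_trans:
  assumes "homotopic_paths S (p +++ q) r" "homotopic_paths S (b +++ r) c"
    "path b" "path_image b \<subseteq> S" "pathfinish b = pathstart p" "pathfinish p = pathstart q"
  shows "homotopic_paths S ((b +++ p) +++ q) c"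
proof -
  have pq: "path p" "path q" "path_image p \<subseteq> S" "path_image q \<subseteq> S"
    using homotopic_paths_imp_path[OF assms(1)] homotopic_paths_imp_subset[OF assms(1)]
      assms(6) by (auto simp: path_join path_image_join)
  have "homotopic_paths S ((b +++ p) +++ q) (b +++ (p +++ q))"
    using homotopic_paths_assoc[of b S p q] pq assms(3-6) homotopic_paths_sym by blast
  also have "homotopic_paths S (b +++ (p +++ q)) (b +++ r)"
    using assms(1,3,4,5) by (intro homotopic_paths_join) auto
  finally show ?thesis using assms(2) homotopic_paths_trans by blast
qed

abbreviation "cv \<sigma> \<equiv> convex hull (vertex_pt ` \<sigma>)"

locale cplx =
  fixes Y :: "nat set set" and n :: nat
  assumes Y_sub: "\<sigma> \<in> Y \<Longrightarrow> \<sigma> \<noteq> {} \<and> \<sigma> \<subseteq> {0..n}"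
  and Y_down: "\<sigma> \<in> Y \<Longrightarrow> \<tau> \<noteq> {} \<Longrightarrow> \<tau> \<subseteq> \<sigma> \<Longrightarrow> \<tau> \<in> Y"
  and Y_cone: "S0 \<noteq> {} \<Longrightarrow> S0 \<subseteq> {0..n} \<Longrightarrow> card S0 \<le> 5 \<Longrightarrow>
      \<exists>w. {w} \<in> Y \<and> (\<forall>\<tau>\<in>Y. \<tau> \<subseteq> S0 \<and> card \<tau> \<le> 2 \<longrightarrow> insert w \<tau> \<in> Y)"
begin

definition "SS = realization Y"

lemma fin: "\<sigma> \<in> Y \<Longrightarrow> finite \<sigma>"
  using Y_sub finite_subset by blast

lemma cv_sub: "\<sigma> \<in> Y \<Longrightarrow> cv \<sigma> \<subseteq> SS"
  unfolding SS_def realization_def by blast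

lemma vert_in: "\<sigma> \<in> Y \<Longrightarrow> v \<in> \<sigma> \<Longrightarrow> {v} \<in> Y"
  using Y_down by blast

lemma vert_le: "{v} \<in> Y \<Longrightarrow> v \<le> n"
  using Y_sub by fastforce

lemma seg_cv: "x \<in> cv \<sigma> \<Longrightarrow> y \<in> cv \<sigma> \<Longrightarrow> closed_segment x y \<subseteq> cv \<sigma>"
  by (simp add: closed_segment_subset convex_convex_hull)

lemma e_cv: "v \<in> \<sigma> \<Longrightarrow> vertex_pt v \<in> cv \<sigma>"
  by (simp add: hull_inc)

definition "v0 = (SOME w. {w} \<in> Y)"

lemma v0: "{v0} \<in> Y"
proof -
  obtain w where "{w} \<in> Y" using Y_cone[of "{0}"] by auto
  then show ?thesis unfolding v0_def by (rule someI)
qed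

definition "ca a = (SOME w. {v0, w} \<in> Y \<and> {a, w} \<in> Y)"

lemma ca: assumes "{a} \<in> Y" shows "{v0, ca a} \<in> Y" "{a, ca a} \<in> Y"
proof -
  have "\<exists>w. {v0, w} \<in> Y \<and> {a, w} \<in> Y"
  proof -
    obtain w where w: "{w} \<in> Y" "\<forall>\<tau>\<in>Y. \<tau> \<subseteq> {v0, a} \<and> card \<tau> \<le> 2 \<longrightarrow> insert w \<tau> \<in> Y"
      using Y_cone[of "{v0, a}"] v0 assms vert_le by (auto simp: card_insert_le_m1)
    then have "insert w {v0} \<in> Y" "insert w {a} \<in> Y" using v0 assms by auto
    then show ?thesis by (auto simp: insert_commute)
  qed
  then show "{v0, ca a} \<in> Y" "{a, ca a} \<in> Y" unfolding ca_def by (metis (mono_tags, lifting) someI)+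
qed

definition "alpha a = linepath (vertex_pt v0) (vertex_pt (ca a)) +++ linepath (vertex_pt (ca a)) (vertex_pt a)"

lemma alpha: assumes "{a} \<in> Y"
  shows "path (alpha a)" "path_image (alpha a) \<subseteq> SS" "pathstart (alpha a) = vertex_pt v0"
    "pathfinish (alpha a) = vertex_pt a"
proof -
  have "closed_segment (vertex_pt v0) (vertex_pt (ca a)) \<subseteq> SS"
    using seg_cv[OF e_cv e_cv] cv_sub ca(1)[OF assms] by blast
  moreover have "closed_segment (vertex_pt (ca a)) (vertex_pt a) \<subseteq> SS"
    using seg_cv[OF e_cv e_cv] cv_sub ca(2)[OF assms] by blast
  ultimately show "path (alpha a)" "path_image (alpha a) \<subseteq> SS" "pathstart (alpha a) = vertex_pt v0"
    "pathfinish (alpha a) = vertex_pt a"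
    unfolding alpha_def by (auto simp: path_image_join)
qed


lemma card5: "card {a1, a2, a3, a4, a5::nat} \<le> 5"
  using card_length[of "[a1,a2,a3,a4,a5]"] by simp

lemma edge:
  assumes ab: "{a, b} \<in> Y"
  shows "homotopic_paths SS (alpha a +++ linepath (vertex_pt a) (vertex_pt b)) (alpha b)"
proof -
  have A: "{a} \<in> Y" "{b} \<in> Y" using vert_in[OF ab] by auto
  define S0 where "S0 = {v0, ca a, a, b, ca b}"
  have caa: "{ca a} \<in> Y" using vert_in[OF ca(1)[OF A(1)], of "ca a"] by simp
  have cab: "{ca b} \<in> Y" using vert_in[OF ca(1)[OF A(2)], of "ca b"] by simp
  have "S0 \<subseteq> {0..n}" unfolding S0_def using vert_le v0 A caa cab by auto
  moreover have "card S0 \<le> 5" unfolding S0_def by (rule card5)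
  moreover have "S0 \<noteq> {}" unfolding S0_def by simp
  ultimately obtain w where w: "{w} \<in> Y" "\<And>\<tau>. \<tau> \<in> Y \<Longrightarrow> \<tau> \<subseteq> S0 \<Longrightarrow> card \<tau> \<le> 2 \<Longrightarrow> insert w \<tau> \<in> Y"
    using Y_cone[of S0] by blast
  define T where "T = (\<Union>\<tau>\<in>{\<tau>. \<tau> \<in> Y \<and> \<tau> \<subseteq> S0 \<and> card \<tau> \<le> 2}. cv (insert w \<tau>))"
  have TS: "T \<subseteq> SS" unfolding T_def using w(2) cv_sub by blast
  have Tseg: "closed_segment (vertex_pt x) (vertex_pt y) \<subseteq> T"
    if "{x, y} \<in> Y" "x \<in> S0" "y \<in> S0" for x y
  proof -
    have "card {x, y} \<le> 2" by (simp add: card_insert_le_m1)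
    then have "cv (insert w {x, y}) \<subseteq> T" unfolding T_def using that by blast
    moreover have "closed_segment (vertex_pt x) (vertex_pt y) \<subseteq> cv (insert w {x, y})"
      by (intro seg_cv e_cv) auto
    ultimately show ?thesis by blast
  qed
  have st: "starlike T"
    unfolding starlike_def
  proof (intro bexI ballI)
    have "card {v0} \<le> 2" by simp
    then have "cv (insert w {v0}) \<subseteq> T" unfolding T_def S0_def using v0 by blast
    then show "vertex_pt w \<in> T" using e_cv[of w "insert w {v0}"] by blast
    fix x assume "x \<in> T"
    then obtain \<tau> where "\<tau> \<in> Y" "\<tau> \<subseteq> S0" "card \<tau> \<le> 2" "x \<in> cv (insert w \<tau>)"
      unfolding T_def by blast
    moreover have "closed_segment (vertex_pt w) x \<subseteq> cv (insert w \<tau>)"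
      using calculation by (intro seg_cv e_cv) auto
    ultimately show "closed_segment (vertex_pt w) x \<subseteq> T" unfolding T_def by blast
  qed
  have s1: "closed_segment (vertex_pt v0) (vertex_pt (ca a)) \<subseteq> T"
    by (rule Tseg) (use ca(1)[OF A(1)] in \<open>auto simp: S0_def insert_commute\<close>)
  have s2: "closed_segment (vertex_pt (ca a)) (vertex_pt a) \<subseteq> T"
    by (rule Tseg) (use ca(2)[OF A(1)] in \<open>auto simp: S0_def insert_commute\<close>)
  have s3: "closed_segment (vertex_pt a) (vertex_pt b) \<subseteq> T"
    by (rule Tseg) (use ab in \<open>auto simp: S0_def insert_commute\<close>)
  have s4: "closed_segment (vertex_pt v0) (vertex_pt (ca b)) \<subseteq> T"
    by (rule Tseg) (use ca(1)[OF A(2)] in \<open>auto simp: S0_def insert_commute\<close>)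
  have s5: "closed_segment (vertex_pt (ca b)) (vertex_pt b) \<subseteq> T"
    by (rule Tseg) (use ca(2)[OF A(2)] in \<open>auto simp: S0_def insert_commute\<close>)
  show ?thesis
    apply (rule hp_star[OF TS st])
    using s1 s2 s3 s4 s5 unfolding alpha_def path_image_join
    by (simp_all add: path_image_join)
qed

end

lemma hp_cancel:
  fixes b :: "real \<Rightarrow> 'a::real_normed_vector"
  assumes H: "homotopic_paths S (b +++ p) (b +++ q)" and b: "path b" "path_image b \<subseteq> S"
    and e: "pathfinish b = pathstart p" "pathfinish b = pathstart q"
  shows "homotopic_paths S p q"
proof -
  have pq: "path p" "path q" "path_image p \<subseteq> S" "path_image q \<subseteq> S"
    using homotopic_paths_imp_path[OF H] homotopic_paths_imp_subset[OF H] e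
    by (auto simp: path_image_join)
  have L: "homotopic_paths S ((reversepath b +++ b) +++ r) r"
    if r: "path r" "path_image r \<subseteq> S" "pathstart r = pathfinish b" for r
  proof -
    have 1: "homotopic_paths S (linepath (pathstart r) (pathstart r) +++ r) r"
      using homotopic_paths_lid r(1,2) by blast
    have 2: "homotopic_paths S (reversepath b +++ b) (linepath (pathstart r) (pathstart r))"
      using homotopic_paths_linv[OF b] r(3) by simp
    have 3: "homotopic_paths S ((reversepath b +++ b) +++ r) (linepath (pathstart r) (pathstart r) +++ r)"
      by (rule homotopic_paths_join[OF 2]) (use r in auto)
    show ?thesis by (rule homotopic_paths_trans[OF 3 1])
  qed
  have A: "homotopic_paths S (reversepath b +++ (b +++ r)) ((reversepath b +++ b) +++ r)"
    if "path r" "path_image r \<subseteq> S" "pathstart r = pathfinish b" for r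
    using homotopic_paths_assoc[of "reversepath b" S b r] b that by simp
  have M: "homotopic_paths S (reversepath b +++ (b +++ p)) (reversepath b +++ (b +++ q))"
    by (rule homotopic_paths_join) (use H b e in auto)
  have P: "homotopic_paths S p (reversepath b +++ (b +++ p))"
    using homotopic_paths_sym[OF homotopic_paths_trans[OF A[OF pq(1) pq(3) e(1)[symmetric]] L[OF pq(1) pq(3) e(1)[symmetric]]]] .
  have Q: "homotopic_paths S (reversepath b +++ (b +++ q)) q"
    using homotopic_paths_trans[OF A[OF pq(2) pq(4) e(2)[symmetric]] L[OF pq(2) pq(4) e(2)[symmetric]]] .
  show ?thesis using homotopic_paths_trans[OF homotopic_paths_trans[OF P M] Q] .
qed

context cplx begin

definition "vx x = (SOME v. \<exists>\<sigma>\<in>Y. v \<in> \<sigma> \<and> x \<in> cv \<sigma>)"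

lemma vx: assumes "x \<in> SS" shows "\<exists>\<sigma>\<in>Y. vx x \<in> \<sigma> \<and> x \<in> cv \<sigma>"
proof -
  obtain \<sigma> where "\<sigma> \<in> Y" "x \<in> cv \<sigma>" using assms unfolding SS_def realization_def by blast
  moreover obtain v where "v \<in> \<sigma>" using Y_sub[OF \<open>\<sigma> \<in> Y\<close>] by blast
  ultimately have "\<exists>v. \<exists>\<sigma>\<in>Y. v \<in> \<sigma> \<and> x \<in> cv \<sigma>" by blast
  then show ?thesis unfolding vx_def by (rule someI_ex)
qed

lemma vx_Y: "x \<in> SS \<Longrightarrow> {vx x} \<in> Y"
  using vx vert_in by blast

definition "beta x = alpha (vx x) +++ linepath (vertex_pt (vx x)) x"

lemma beta: assumes "x \<in> SS"
  shows "path (beta x)" "path_image (beta x) \<subseteq> SS" "pathstart (beta x) = vertex_pt v0"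
    "pathfinish (beta x) = x"
proof -
  obtain \<sigma> where s: "\<sigma> \<in> Y" "vx x \<in> \<sigma>" "x \<in> cv \<sigma>" using vx[OF assms] by blast
  have "closed_segment (vertex_pt (vx x)) x \<subseteq> SS"
    using seg_cv[OF e_cv[OF s(2)] s(3)] cv_sub[OF s(1)] by blast
  then show "path (beta x)" "path_image (beta x) \<subseteq> SS" "pathstart (beta x) = vertex_pt v0"
    "pathfinish (beta x) = x"
    using alpha[OF vx_Y[OF assms]] unfolding beta_def by (auto simp: path_image_join)
qed

lemma supp: "x \<in> cv \<sigma> \<Longrightarrow> apply_bcontfun x v > 0 \<Longrightarrow> v \<in> \<sigma>"
  using conv_coord_zero by force

lemma S2: assumes "x \<in> SS" "apply_bcontfun x v > 0"
  shows "homotopic_paths SS (beta x) (alpha v +++ linepath (vertex_pt v) x)"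
proof -
  obtain \<sigma> where s: "\<sigma> \<in> Y" "vx x \<in> \<sigma>" "x \<in> cv \<sigma>" using vx[OF assms(1)] by blast
  have v: "v \<in> \<sigma>" using supp[OF s(3) assms(2)] .
  have vb: "{v, vx x} \<in> Y" using Y_down[OF s(1)] v s(2) by auto
  have V: "{v} \<in> Y" using vert_in[OF s(1) v] .
  have cs: "cv \<sigma> \<subseteq> SS" using cv_sub[OF s(1)] .
  have seg1: "closed_segment (vertex_pt v) (vertex_pt (vx x)) \<subseteq> cv \<sigma>"
    using seg_cv[OF e_cv[OF v] e_cv[OF s(2)]] .
  have seg2: "closed_segment (vertex_pt (vx x)) x \<subseteq> cv \<sigma>"
    using seg_cv[OF e_cv[OF s(2)] s(3)] .
  have seg3: "closed_segment (vertex_pt v) x \<subseteq> cv \<sigma>"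
    using seg_cv[OF e_cv[OF v] s(3)] .
  have st: "starlike (cv \<sigma>)"
    using e_cv[OF v] by (intro convex_imp_starlike) (auto simp: convex_convex_hull)
  have h1: "homotopic_paths SS (linepath (vertex_pt v) (vertex_pt (vx x)) +++ linepath (vertex_pt (vx x)) x)
      (linepath (vertex_pt v) x)"
    by (rule hp_star[OF cs st]) (use seg1 seg2 seg3 in \<open>auto simp: path_image_join\<close>)
  have h2: "homotopic_paths SS (alpha v +++ linepath (vertex_pt v) x) (alpha v +++ linepath (vertex_pt v) x)"
    using alpha[OF V] seg3 cs by (auto simp: path_image_join)
  have h3: "homotopic_paths SS ((alpha v +++ linepath (vertex_pt v) (vertex_pt (vx x))) +++ linepath (vertex_pt (vx x)) x)
      (alpha v +++ linepath (vertex_pt v) x)"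
    by (rule hp_assoc_trans[OF h1 h2]) (use alpha[OF V] in auto)
  have h4: "homotopic_paths SS (beta x) ((alpha v +++ linepath (vertex_pt v) (vertex_pt (vx x))) +++ linepath (vertex_pt (vx x)) x)"
    unfolding beta_def
    apply (rule homotopic_paths_join)
    using edge[OF vb] homotopic_paths_sym apply blast
    using seg2 cs apply auto[1]
    using alpha[OF vx_Y[OF assms(1)]] by simp
  show ?thesis using h3 h4 homotopic_paths_trans by blast
qed

end

context cplx begin

definition "PP g \<longleftrightarrow> homotopic_paths SS (beta (pathstart g) +++ g) (beta (pathfinish g))"

lemma PP_join:
  assumes "PP g" "PP h" "pathfinish g = pathstart h" "path g" "path h"
    "path_image g \<subseteq> SS" "path_image h \<subseteq> SS"
  shows "PP (g +++ h)"
proof -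
  have s: "pathstart g \<in> SS" "pathfinish g \<in> SS"
    using assms(6) pathstart_in_path_image pathfinish_in_path_image by blast+
  note b = beta[OF s(1)]
  have "homotopic_paths SS (beta (pathstart g) +++ (g +++ h)) ((beta (pathstart g) +++ g) +++ h)"
    using homotopic_paths_assoc[of "beta (pathstart g)" SS g h] b assms(3-7) by simp
  moreover have "homotopic_paths SS ((beta (pathstart g) +++ g) +++ h) (beta (pathfinish g) +++ h)"
    by (rule homotopic_paths_join) (use assms(1,2,3,5,7) beta[OF s(2)] in \<open>auto simp: PP_def\<close>)
  moreover have "homotopic_paths SS (beta (pathfinish g) +++ h) (beta (pathfinish h))"
    using assms(2,3) by (simp add: PP_def)
  ultimately show ?thesis unfolding PP_def using assms(3)
    by (simp del: homotopic_paths_refl) (meson homotopic_paths_trans)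
qed

lemma PP_cong:
  assumes "PP g" "homotopic_paths SS g h"
  shows "PP h"
proof -
  have e: "pathstart h = pathstart g" "pathfinish h = pathfinish g"
    using homotopic_paths_imp_pathstart[OF assms(2)] homotopic_paths_imp_pathfinish[OF assms(2)] by auto
  have s: "pathstart g \<in> SS"
    using homotopic_paths_imp_subset[OF assms(2)] pathstart_in_path_image by blast
  have "homotopic_paths SS (beta (pathstart g) +++ h) (beta (pathstart g) +++ g)"
    by (rule homotopic_paths_join) (use beta[OF s] assms(2) homotopic_paths_sym e in auto)
  then show ?thesis using assms(1) e unfolding PP_def using homotopic_paths_trans by metis
qed

definition "Tv v = (\<Union>\<sigma>\<in>{\<sigma>\<in>Y. v \<in> \<sigma>}. cv \<sigma>)"

lemma Tv_sub: "Tv v \<subseteq> SS" unfolding Tv_def using cv_sub by blast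

lemma Tv_in: "y \<in> SS \<Longrightarrow> apply_bcontfun y v > 0 \<Longrightarrow> closed_segment (vertex_pt v) y \<subseteq> Tv v"
proof -
  assume "y \<in> SS" "apply_bcontfun y v > 0"
  then obtain \<sigma> where "\<sigma> \<in> Y" "y \<in> cv \<sigma>" "v \<in> \<sigma>" unfolding SS_def realization_def using supp by blast
  then show ?thesis unfolding Tv_def using seg_cv[OF e_cv] by blast
qed

lemma Tv_star: assumes "{v} \<in> Y" shows "starlike (Tv v)"
  unfolding starlike_def
proof (intro bexI ballI)
  show "vertex_pt v \<in> Tv v" unfolding Tv_def using assms e_cv[of v "{v}"] by blast
  fix x assume "x \<in> Tv v"
  then obtain \<sigma> where "\<sigma> \<in> Y" "v \<in> \<sigma>" "x \<in> cv \<sigma>" unfolding Tv_def by blast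
  then show "closed_segment (vertex_pt v) x \<subseteq> Tv v" unfolding Tv_def using seg_cv[OF e_cv] by blast
qed

lemma S3:
  assumes h: "path h" "path_image h \<subseteq> SS" and pos: "\<And>y. y \<in> path_image h \<Longrightarrow> apply_bcontfun y v > 0"
  shows "PP h"
proof -
  define s where "s = pathstart h"
  define f where "f = pathfinish h"
  have sf: "s \<in> path_image h" "f \<in> path_image h" unfolding s_def f_def
    by (auto simp: pathstart_in_path_image pathfinish_in_path_image)
  have sS: "s \<in> SS" "f \<in> SS" using sf h(2) by auto
  obtain \<sigma> where "\<sigma> \<in> Y" "s \<in> cv \<sigma>" using sS unfolding SS_def realization_def by blast
  then have V: "{v} \<in> Y" using supp pos sf vert_in by blast
  have seg_s: "closed_segment (vertex_pt v) s \<subseteq> Tv v" using Tv_in sS pos sf by blast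
  have seg_f: "closed_segment (vertex_pt v) f \<subseteq> Tv v" using Tv_in sS pos sf by blast
  have hT: "path_image h \<subseteq> Tv v"
  proof
    fix y assume "y \<in> path_image h"
    then show "y \<in> Tv v" using Tv_in[of y v] pos h(2) by auto
  qed
  have h1: "homotopic_paths SS (linepath (vertex_pt v) s +++ h) (linepath (vertex_pt v) f)"
    by (rule hp_star[OF Tv_sub Tv_star[OF V]])
       (use h seg_s seg_f hT in \<open>auto simp: path_image_join s_def f_def\<close>)
  have h2: "homotopic_paths SS (alpha v +++ linepath (vertex_pt v) f) (beta f)"
    using S2[OF sS(2) pos[OF sf(2)]] homotopic_paths_sym by blast
  have h3: "homotopic_paths SS ((alpha v +++ linepath (vertex_pt v) s) +++ h) (beta f)"
    by (rule hp_assoc_trans[OF h1 h2]) (use alpha[OF V] s_def in auto)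
  have h4: "homotopic_paths SS (beta s +++ h) ((alpha v +++ linepath (vertex_pt v) s) +++ h)"
    by (rule homotopic_paths_join) (use S2[OF sS(1) pos[OF sf(1)]] h s_def beta[OF sS(1)] in auto)
  show ?thesis unfolding PP_def s_def[symmetric] f_def[symmetric]
    using homotopic_paths_trans[OF h4 h3] .
qed

end

context cplx begin

lemma big_coord: assumes "x \<in> SS" shows "\<exists>v. apply_bcontfun x v \<ge> 1 / (real n + 1)"
proof (rule ccontr)
  assume H: "\<not> ?thesis"
  obtain \<sigma> where s: "\<sigma> \<in> Y" "x \<in> cv \<sigma>" using assms unfolding SS_def realization_def by blast
  have f: "finite \<sigma>" using fin[OF s(1)] .
  have c: "card \<sigma> \<le> n + 1" using card_mono[of "{0..n}" \<sigma>] Y_sub[OF s(1)] by simp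
  have c0: "card \<sigma> > 0" using Y_sub[OF s(1)] f by (simp add: card_gt_0_iff)
  have "(\<Sum>u\<in>\<sigma>. apply_bcontfun x u) < real (card \<sigma>) * (1 / (real n + 1))"
    by (rule sum_bounded_above_strict) (use H c0 in \<open>auto simp: not_le\<close>)
  also have "\<dots> \<le> 1" using c by (simp add: field_simps)
  finally show False using conv_coord_sum[OF s(2) f] by simp
qed

lemma S4: assumes g: "path g" "path_image g \<subseteq> SS" shows "PP g"
proof -
  define \<epsilon> :: real where "\<epsilon> = 1 / (real n + 1)"
  have ep: "\<epsilon> > 0" unfolding \<epsilon>_def by simp
  have "uniformly_continuous_on {0..1} g"
    using g(1) unfolding path_def by (intro compact_uniformly_continuous) auto
  then obtain d where d: "d > 0" "\<And>s t. s \<in> {0..1} \<Longrightarrow> t \<in> {0..1} \<Longrightarrow> dist t s < d \<Longrightarrow> dist (g t) (g s) < \<epsilon>"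
    unfolding uniformly_continuous_on_def using ep by metis
  have small: "PP (subpath u w g)" if uw: "u \<in> {0..1}" "w \<in> {0..1}" "u \<le> w" "w - u < d" for u w
  proof -
    have gu: "g u \<in> SS" using g(2) uw unfolding path_image_def by auto
    obtain v where v: "apply_bcontfun (g u) v \<ge> \<epsilon>" using big_coord[OF gu] unfolding \<epsilon>_def by blast
    show ?thesis
    proof (rule S3)
      show "path (subpath u w g)" using g(1) uw by simp
      show "path_image (subpath u w g) \<subseteq> SS"
        using path_image_subpath_subset[of u w g] uw g(2) by auto
      fix y assume "y \<in> path_image (subpath u w g)"
      then obtain t where t: "t \<in> {u..w}" "y = g t" using uw by (auto simp: path_image_subpath)
      have "t \<in> {0..1}" using t uw by auto
      then have "dist (g t) (g u) < \<epsilon>" using d(2)[of u t] uw t by (auto simp: dist_real_def)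
      then have "\<bar>apply_bcontfun (g t) v - apply_bcontfun (g u) v\<bar> < \<epsilon>"
        using coord_dist[of "g t" v "g u"] by linarith
      then show "apply_bcontfun y v > 0" using v t(2) by simp
    qed
  qed
  have ind: "\<And>u w. u \<in> {0..1} \<Longrightarrow> w \<in> {0..1} \<Longrightarrow> u \<le> w \<Longrightarrow> w - u \<le> real N * (d / 2) \<Longrightarrow>
      PP (subpath u w g)" for N
  proof (induction N)
    case 0
    then show ?case using small d by auto
  next
    case (Suc N)
    show ?case
    proof (cases "w - u < d")
      case True
      then show ?thesis using small Suc.prems by auto
    next
      case False
      define m where "m = u + d / 2"
      have m: "m \<in> {0..1}" "u \<le> m" "m \<le> w" "m - u < d" "w - m \<le> real N * (d / 2)"
        using False Suc.prems d unfolding m_def by (auto simp: algebra_simps)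
      have P1: "PP (subpath u m g)" using small[of u m] m Suc.prems by auto
      have P2: "PP (subpath m w g)" using Suc.IH[of m w] m Suc.prems by auto
      have J: "PP (subpath u m g +++ subpath m w g)"
        by (rule PP_join[OF P1 P2])
           (use g Suc.prems m path_image_subpath_subset[of u m g] path_image_subpath_subset[of m w g] in auto)
      show ?thesis
        by (rule PP_cong[OF J], rule homotopic_join_subpaths1) (use g Suc.prems m in auto)
    qed
  qed
  obtain N :: nat where N: "2 / d \<le> real N" using real_arch_simple by blast
  have "1 \<le> real N * (d / 2)" using N d by (simp add: field_simps)
  then have "PP (subpath 0 1 g)" by (intro ind) auto
  then show ?thesis by simp
qed

theorem simply_connected_SS: "simply_connected SS"
  unfolding simply_connected_eq_homotopic_paths
proof (intro conjI allI impI)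
  show "path_connected SS"
    unfolding path_connected_def
  proof (intro ballI)
    fix x y assume xy: "x \<in> SS" "y \<in> SS"
    show "\<exists>g. path g \<and> path_image g \<subseteq> SS \<and> pathstart g = x \<and> pathfinish g = y"
      by (rule exI[of _ "reversepath (beta x) +++ beta y"])
         (use beta[OF xy(1)] beta[OF xy(2)] in \<open>auto simp: path_image_join\<close>)
  qed
  fix p q assume H: "path p \<and> path_image p \<subseteq> SS \<and> path q \<and> path_image q \<subseteq> SS \<and>
      pathstart q = pathstart p \<and> pathfinish q = pathfinish p"
  have s: "pathstart p \<in> SS" using H pathstart_in_path_image by blast
  have "PP p" "PP q" using S4 H by auto
  then have "homotopic_paths SS (beta (pathstart p) +++ p) (beta (pathstart p) +++ q)"
    unfolding PP_def using H homotopic_paths_sym homotopic_paths_trans by metis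
  then show "homotopic_paths SS p q"
    by (rule hp_cancel) (use beta[OF s] H in auto)
qed

end

lemma prob_pair_times:
  "measure_pmf.prob (pair_pmf M N) (A \<times> B) = measure_pmf.prob M A * measure_pmf.prob N B"
proof -
  have "measure_pmf.prob (pair_pmf M N) (A \<times> B) =
        measure_pmf.prob (pair_pmf M N) ((A \<times> B) \<inter> set_pmf (pair_pmf M N))"
    by (rule measure_Int_set_pmf[symmetric])
  also have "(A \<times> B) \<inter> set_pmf (pair_pmf M N) = (A \<inter> set_pmf M) \<times> (B \<inter> set_pmf N)" by auto
  also have "measure_pmf.prob (pair_pmf M N) \<dots> =
      measure_pmf.prob M (A \<inter> set_pmf M) * measure_pmf.prob N (B \<inter> set_pmf N)"
    by (intro measure_pmf_prob_product) (auto intro: countable_subset[OF _ countable_set_pmf])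
  finally show ?thesis by (simp add: measure_Int_set_pmf)
qed

definition "localto E B \<longleftrightarrow> (\<forall>f g. (\<forall>x\<in>B. f x = g x) \<longrightarrow> E f = E g)"

lemma indep_split0:
  assumes A: "finite A" "B \<subseteq> A" and E: "localto E B" and R: "localto R (A - B)"
  shows "measure_pmf.prob (Pi_pmf A d p) {f. E f \<and> R f} =
         measure_pmf.prob (Pi_pmf B d p) {f. E f} * measure_pmf.prob (Pi_pmf (A - B) d p) {f. R f}"
proof -
  have fB: "finite B" "finite (A - B)" using A finite_subset by auto
  have AU: "A = B \<union> (A - B)" using A by auto
  define h where "h = (\<lambda>(f, g) x. if x \<in> B then f x else g x :: 'b)"
  have "Pi_pmf A d p = Pi_pmf (B \<union> (A - B)) d p" using AU by simp
  also have "\<dots> = map_pmf h (pair_pmf (Pi_pmf B d p) (Pi_pmf (A - B) d p))"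
    unfolding h_def by (rule Pi_pmf_union) (use fB in auto)
  finally have eq: "Pi_pmf A d p = map_pmf h (pair_pmf (Pi_pmf B d p) (Pi_pmf (A - B) d p))" .
  have pre: "h -` {f. E f \<and> R f} = {f. E f} \<times> {f. R f}"
  proof -
    have "E (h (f, g)) = E f" for f g using E unfolding localto_def h_def by auto
    moreover have "R (h (f, g)) = R g" for f g using R unfolding localto_def h_def by auto
    ultimately show ?thesis by auto
  qed
  show ?thesis unfolding eq measure_map_pmf pre by (rule prob_pair_times)
qed

lemma indep_split:
  assumes A: "finite A" "B \<subseteq> A" and E: "localto E B" and R: "localto R (A - B)"
  shows "measure_pmf.prob (Pi_pmf A d p) {f. E f \<and> R f} =
         measure_pmf.prob (Pi_pmf A d p) {f. E f} * measure_pmf.prob (Pi_pmf A d p) {f. R f}"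
proof -
  have T: "localto (\<lambda>_. True) X" for X unfolding localto_def by auto
  have 1: "measure_pmf.prob (Pi_pmf A d p) {f. E f} =
         measure_pmf.prob (Pi_pmf B d p) {f. E f}"
    using indep_split0[OF A E T, of d p] by simp
  have 2: "measure_pmf.prob (Pi_pmf A d p) {f. R f} =
          measure_pmf.prob (Pi_pmf (A - B) d p) {f. R f}"
    using indep_split0[OF A T R, of d p] by simp
  show ?thesis using indep_split0[OF A E R, of d p] 1 2 by simp
qed

lemma indep_blocks:
  fixes E :: "'w \<Rightarrow> ('a \<Rightarrow> 'b) \<Rightarrow> bool" and d :: 'b
  assumes A: "finite A" and W: "finite W" and D: "\<And>w. w \<in> W \<Longrightarrow> D w \<subseteq> A"
    and disj: "\<And>w w'. w \<in> W \<Longrightarrow> w' \<in> W \<Longrightarrow> w \<noteq> w' \<Longrightarrow> D w \<inter> D w' = {}"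
    and E: "\<And>w. w \<in> W \<Longrightarrow> localto (E w) (D w)"
  shows "measure_pmf.prob (Pi_pmf A d p) {f. \<forall>w\<in>W. E w f} =
         (\<Prod>w\<in>W. measure_pmf.prob (Pi_pmf A d p) {f. E w f})"
  using W D disj E
proof (induction W rule: finite_induct)
  case empty
  then show ?case by simp
next
  case (insert w W)
  have R: "localto (\<lambda>f. \<forall>w'\<in>W. E w' f) (A - D w)"
    unfolding localto_def
  proof (intro allI impI)
    fix f g :: "'a \<Rightarrow> 'b" assume fg: "\<forall>x\<in>A - D w. f x = g x"
    have "E w' f = E w' g" if "w' \<in> W" for w'
    proof -
      have "D w' \<subseteq> A - D w" using insert.prems(1,2)[of w'] insert.prems(1) insert.hyps(2) that by blast
      then show ?thesis using insert.prems(3)[of w'] that fg unfolding localto_def by blast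
    qed
    then show "(\<forall>w'\<in>W. E w' f) = (\<forall>w'\<in>W. E w' g)" by blast
  qed
  have "measure_pmf.prob (Pi_pmf A d p) {f. \<forall>w'\<in>insert w W. E w' f} =
        measure_pmf.prob (Pi_pmf A d p) {f. E w f \<and> (\<forall>w'\<in>W. E w' f)}" by simp
  also have "\<dots> = measure_pmf.prob (Pi_pmf A d p) {f. E w f} *
                  measure_pmf.prob (Pi_pmf A d p) {f. \<forall>w'\<in>W. E w' f}"
    by (rule indep_split[OF A insert.prems(1)[of w] insert.prems(3)[of w] R]) auto
  also have "measure_pmf.prob (Pi_pmf A d p) {f. \<forall>w'\<in>W. E w' f} =
      (\<Prod>w\<in>W. measure_pmf.prob (Pi_pmf A d p) {f. E w f})"
    by (rule insert.IH) (use insert.prems in auto)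
  finally show ?case using insert.hyps by simp
qed

lemma prob_coord:
  assumes "finite A" "\<sigma> \<in> A" "0 \<le> r \<sigma>" "r \<sigma> \<le> 1"
  shows "measure_pmf.prob (Pi_pmf A False (\<lambda>\<sigma>. bernoulli_pmf (r \<sigma>))) {f. f \<sigma>} = r \<sigma>"
proof -
  have "measure_pmf.prob (Pi_pmf A False (\<lambda>\<sigma>. bernoulli_pmf (r \<sigma>))) {f. f \<sigma>} =
        measure_pmf.prob (map_pmf (\<lambda>f. f \<sigma>) (Pi_pmf A False (\<lambda>\<sigma>. bernoulli_pmf (r \<sigma>)))) {True}"
    by (simp add: vimage_def)
  also have "\<dots> = r \<sigma>" using assms by (simp add: Pi_pmf_component measure_pmf_single)
  finally show ?thesis .
qed

definition "DD S0 w = insert {w} ((\<lambda>x. {x, w}) ` S0 \<union> (\<lambda>(x, y). {x, y, w}) ` (S0 \<times> S0))"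
definition "Fam n = {S0. S0 \<noteq> {} \<and> S0 \<subseteq> {0..n::nat} \<and> card S0 \<le> 5}"
definition "Good n X \<longleftrightarrow> (\<forall>S0\<in>Fam n. \<exists>w\<in>{0..n}-S0. \<forall>\<sigma>\<in>DD S0 w. X \<sigma>)"

lemma finite_lower_faces: "finite (lower_faces n)"
  by (rule finite_subset[of _ "Pow {0..n}"]) (auto simp: lower_faces_def)

lemma supp_lower: "X \<in> set_pmf (lower_hypergraph n r) \<Longrightarrow> X \<sigma> \<Longrightarrow> \<sigma> \<in> lower_faces n"
  using set_Pi_pmf_subset[OF finite_lower_faces, of n False "\<lambda>\<sigma>. bernoulli_pmf (r \<sigma>)"]
  unfolding lower_hypergraph_def by blast

lemma card_le2_cases:
  assumes "finite B" "card B \<le> 2"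
  shows "B = {} \<or> (\<exists>x. B = {x}) \<or> (\<exists>x y. B = {x, y})"
proof -
  have "card B = 0 \<or> card B = 1 \<or> card B = 2" using assms(2) by auto
  moreover have "card B = 0 \<Longrightarrow> B = {}" using assms(1) by simp
  moreover have "card B = 1 \<Longrightarrow> \<exists>x. B = {x}" by (simp add: card_1_singleton_iff)
  moreover have "card B = 2 \<Longrightarrow> \<exists>x y. B = {x, y}" by (metis card_2_iff)
  ultimately show ?thesis by blast
qed

lemma good_cplx:
  assumes X: "X \<in> set_pmf (lower_hypergraph n r)" and G: "Good n X"
  shows "cplx (lower_complex X) n"
proof
  fix \<sigma> assume "\<sigma> \<in> lower_complex X"
  then have "\<sigma> \<noteq> {}" "X \<sigma>" unfolding lower_complex_def by auto
  then show "\<sigma> \<noteq> {} \<and> \<sigma> \<subseteq> {0..n}" using supp_lower[OF X] unfolding lower_faces_def by auto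
next
  fix \<sigma> \<tau> assume "\<sigma> \<in> lower_complex X" "\<tau> \<noteq> {}" "\<tau> \<subseteq> \<sigma>"
  then show "\<tau> \<in> lower_complex X" unfolding lower_complex_def by auto
next
  fix S0 :: "nat set" assume S0: "S0 \<noteq> {}" "S0 \<subseteq> {0..n}" "card S0 \<le> 5"
  then have "S0 \<in> Fam n" unfolding Fam_def by auto
  then obtain w where w: "w \<in> {0..n} - S0" "\<And>\<sigma>. \<sigma> \<in> DD S0 w \<Longrightarrow> X \<sigma>"
    using G unfolding Good_def by blast
  have Xw: "X {w}" "\<And>x. x \<in> S0 \<Longrightarrow> X {x, w}" "\<And>x y. x \<in> S0 \<Longrightarrow> y \<in> S0 \<Longrightarrow> X {x, y, w}"
    using w(2) unfolding DD_def by auto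
  show "\<exists>w. {w} \<in> lower_complex X \<and>
           (\<forall>\<tau>\<in>lower_complex X. \<tau> \<subseteq> S0 \<and> card \<tau> \<le> 2 \<longrightarrow> insert w \<tau> \<in> lower_complex X)"
  proof (intro exI conjI ballI impI)
    show "{w} \<in> lower_complex X" using Xw(1) unfolding lower_complex_def
      by (auto simp: subset_singleton_iff)
    fix \<tau> assume \<tau>: "\<tau> \<in> lower_complex X" "\<tau> \<subseteq> S0 \<and> card \<tau> \<le> 2"
    show "insert w \<tau> \<in> lower_complex X"
      unfolding lower_complex_def
    proof (intro CollectI conjI allI impI)
      show "insert w \<tau> \<noteq> {}" by simp
      fix \<rho> assume \<rho>: "\<rho> \<noteq> {} \<and> \<rho> \<subseteq> insert w \<tau>"
      show "X \<rho>"
      proof (cases "w \<in> \<rho>")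
        case False
        then have "\<rho> \<subseteq> \<tau>" using \<rho> by auto
        then show ?thesis using \<tau>(1) \<rho> unfolding lower_complex_def by auto
      next
        case True
        have "\<tau> \<subseteq> {0..n}" using \<tau>(2) S0(2) by blast
        then have fin: "finite \<tau>" using finite_subset by blast
        have sub: "\<rho> - {w} \<subseteq> \<tau>" using \<rho> by auto
        have "card (\<rho> - {w}) \<le> 2" using card_mono[OF fin sub] \<tau>(2) by simp
        then have "\<rho> - {w} = {} \<or> (\<exists>x. \<rho> - {w} = {x}) \<or> (\<exists>x y. \<rho> - {w} = {x, y})"
          using card_le2_cases finite_subset[OF sub fin] by blast
        moreover have "\<rho> = insert w (\<rho> - {w})" using True by auto
        ultimately show ?thesis
        proof (elim disjE exE)
          assume a: "\<rho> - {w} = {}" "\<rho> = insert w (\<rho> - {w})"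
          show ?thesis using Xw(1) a(2) unfolding a(1) by simp
        next
          fix x assume "\<rho> - {w} = {x}" "\<rho> = insert w (\<rho> - {w})"
          moreover have "x \<in> S0" using calculation sub \<tau>(2) by auto
          ultimately show ?thesis using Xw(2)[of x] by (simp add: insert_commute)
        next
          fix x y assume "\<rho> - {w} = {x, y}" "\<rho> = insert w (\<rho> - {w})"
          moreover have "x \<in> S0" "y \<in> S0" using calculation sub \<tau>(2) by auto
          ultimately show ?thesis using Xw(3)[of x y] by (simp add: insert_commute)
        qed
      qed
    qed
  qed
qed

lemma DD_mem: "\<sigma> \<in> DD S0 w \<Longrightarrow> w \<in> \<sigma> \<and> \<sigma> \<subseteq> insert w S0 \<and> card \<sigma> \<le> 3"
  unfolding DD_def by (auto simp: card_insert_if)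

lemma DD_sub:
  assumes "S0 \<subseteq> {0..n}" "w \<le> n" "3 \<le> n"
  shows "DD S0 w \<subseteq> lower_faces n"
proof
  fix \<sigma> assume s: "\<sigma> \<in> DD S0 w"
  have 1: "\<sigma> \<subseteq> {0..n}" using DD_mem[OF s] assms by auto
  have "card \<sigma> \<le> 3" using DD_mem[OF s] by simp
  then have "\<sigma> \<noteq> {0..n}" using assms(3) by auto
  then show "\<sigma> \<in> lower_faces n" using 1 DD_mem[OF s] unfolding lower_faces_def by auto
qed

lemma card_DD:
  assumes "finite S0" "card S0 \<le> 5"
  shows "card (DD S0 w) \<le> 31"
proof -
  have f: "finite ((\<lambda>x. {x, w}) ` S0)" "finite ((\<lambda>(x, y). {x, y, w}) ` (S0 \<times> S0))"
    using assms by auto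
  have "card (DD S0 w) \<le> card ((\<lambda>x. {x, w}) ` S0 \<union> (\<lambda>(x, y). {x, y, w}) ` (S0 \<times> S0)) + 1"
    unfolding DD_def using f by (simp add: card_insert_if)
  also have "\<dots> \<le> card ((\<lambda>x. {x, w}) ` S0) + card ((\<lambda>(x, y). {x, y, w}) ` (S0 \<times> S0)) + 1"
    using card_Un_le by simp
  also have "\<dots> \<le> card S0 + card (S0 \<times> S0) + 1"
    using card_image_le[OF assms(1), of "\<lambda>x. {x, w}"]
      card_image_le[of "S0 \<times> S0" "\<lambda>(x, y). {x, y, w}"] assms(1) by simp
  also have "card (S0 \<times> S0) = card S0 * card S0" by (simp add: card_cartesian_product)
  also have "card S0 + card S0 * card S0 + 1 \<le> 5 + 5 * 5 + 1"
    using assms(2) by (intro add_mono mult_mono) auto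
  finally show ?thesis by simp
qed

locale probset =
  fixes p :: real and r :: "nat set \<Rightarrow> real" and n :: nat
  assumes p: "0 < p" "p < 1" and r: "\<And>\<sigma>. \<sigma> \<in> lower_faces n \<Longrightarrow> p \<le> r \<sigma> \<and> r \<sigma> \<le> 1"
    and n: "6 \<le> n"
begin

abbreviation "M \<equiv> lower_hypergraph n r"

lemma prob_G:
  assumes "S0 \<subseteq> {0..n}" "card S0 \<le> 5" "w \<le> n"
  shows "measure_pmf.prob M {X. \<forall>\<sigma>\<in>DD S0 w. X \<sigma>} \<ge> p ^ 31"
proof -
  have fS: "finite S0" using assms(1) finite_subset by blast
  have sub: "DD S0 w \<subseteq> lower_faces n" using DD_sub assms n by auto
  have fD: "finite (DD S0 w)" unfolding DD_def using fS by auto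
  have "measure_pmf.prob M {X. \<forall>\<sigma>\<in>DD S0 w. X \<sigma>} = (\<Prod>\<sigma>\<in>DD S0 w. measure_pmf.prob M {X. X \<sigma>})"
    unfolding lower_hypergraph_def
    by (rule indep_blocks[where D = "\<lambda>\<sigma>. {\<sigma>}"]) (use finite_lower_faces fD sub in \<open>auto simp: localto_def\<close>)
  also have "\<dots> = (\<Prod>\<sigma>\<in>DD S0 w. r \<sigma>)"
  proof (rule prod.cong[OF refl])
    fix \<sigma> assume "\<sigma> \<in> DD S0 w"
    then have "\<sigma> \<in> lower_faces n" using sub by auto
    then show "measure_pmf.prob M {X. X \<sigma>} = r \<sigma>"
      unfolding lower_hypergraph_def using r p
      by (intro prob_coord finite_lower_faces) (auto intro: order_trans[of 0 p])
  qed
  also have "\<dots> \<ge> (\<Prod>\<sigma>\<in>DD S0 w. p)"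
    by (rule prod_mono) (use sub r p in \<open>auto intro: less_imp_le\<close>)
  finally have "measure_pmf.prob M {X. \<forall>\<sigma>\<in>DD S0 w. X \<sigma>} \<ge> p ^ card (DD S0 w)" by simp
  moreover have "p ^ 31 \<le> p ^ card (DD S0 w)"
    by (rule power_decreasing) (use card_DD[OF fS assms(2)] p in auto)
  ultimately show ?thesis by linarith
qed

lemma prob_F:
  assumes S0: "S0 \<in> Fam n"
  shows "measure_pmf.prob M {X. \<forall>w\<in>{0..n}-S0. \<not>(\<forall>\<sigma>\<in>DD S0 w. X \<sigma>)} \<le> (1 - p ^ 31) ^ (n - 4)"
proof -
  have S: "S0 \<subseteq> {0..n}" "card S0 \<le> 5" "S0 \<noteq> {}" using S0 unfolding Fam_def by auto
  have fS: "finite S0" using S(1) finite_subset by blast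
  let ?W = "{0..n} - S0"
  have "measure_pmf.prob M {X. \<forall>w\<in>?W. \<not>(\<forall>\<sigma>\<in>DD S0 w. X \<sigma>)} =
        (\<Prod>w\<in>?W. measure_pmf.prob M {X. \<not>(\<forall>\<sigma>\<in>DD S0 w. X \<sigma>)})"
    unfolding lower_hypergraph_def
  proof (rule indep_blocks[where D = "DD S0"])
    show "finite (lower_faces n)" by (rule finite_lower_faces)
    show "finite ?W" by simp
    show "DD S0 w \<subseteq> lower_faces n" if "w \<in> ?W" for w using DD_sub S that n by auto
    show "DD S0 w \<inter> DD S0 w' = {}" if "w \<in> ?W" "w' \<in> ?W" "w \<noteq> w'" for w w'
      using that DD_mem[of _ S0 w] DD_mem[of _ S0 w'] by blast
    show "localto (\<lambda>X. \<not>(\<forall>\<sigma>\<in>DD S0 w. X \<sigma>)) (DD S0 w)" for w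
      unfolding localto_def by auto
  qed
  also have "\<dots> \<le> (\<Prod>w\<in>?W. 1 - p ^ 31)"
  proof (rule prod_mono)
    fix w assume w: "w \<in> ?W"
    have "measure_pmf.prob M {X. \<not>(\<forall>\<sigma>\<in>DD S0 w. X \<sigma>)} = 1 - measure_pmf.prob M {X. \<forall>\<sigma>\<in>DD S0 w. X \<sigma>}"
    proof -
      have "{X. \<not>(\<forall>\<sigma>\<in>DD S0 w. X \<sigma>)} = space (measure_pmf M) - {X. \<forall>\<sigma>\<in>DD S0 w. X \<sigma>}" by auto
      then show ?thesis using measure_pmf.prob_compl[of "{X. \<forall>\<sigma>\<in>DD S0 w. X \<sigma>}" M] by simp
    qed
    then show "0 \<le> measure_pmf.prob M {X. \<not>(\<forall>\<sigma>\<in>DD S0 w. X \<sigma>)} \<and>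
        measure_pmf.prob M {X. \<not>(\<forall>\<sigma>\<in>DD S0 w. X \<sigma>)} \<le> 1 - p ^ 31"
      using prob_G[OF S(1,2), of w] w by auto
  qed
  also have "\<dots> = (1 - p ^ 31) ^ card ?W" by simp
  also have "\<dots> \<le> (1 - p ^ 31) ^ (n - 4)"
  proof (rule power_decreasing)
    have "card ?W = card {0..n} - card S0" using S(1) by (simp add: card_Diff_subset fS)
    then show "n - 4 \<le> card ?W" using S(2) by simp
    have "p ^ 31 \<le> 1" using p by (simp add: power_le_one)
    then show "0 \<le> 1 - p ^ 31" by simp
    show "1 - p ^ 31 \<le> 1" using p by simp
  qed
  finally show ?thesis .
qed

end

lemma Fam_lists: "Fam n \<subseteq> set ` {xs. set xs \<subseteq> {0..n} \<and> length xs = 5}"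
proof
  fix S0 assume S0: "S0 \<in> Fam n"
  then have S: "S0 \<noteq> {}" "S0 \<subseteq> {0..n}" "card S0 \<le> 5" unfolding Fam_def by auto
  have f: "finite S0" using S(2) finite_subset by blast
  define xs where "xs = sorted_list_of_set S0 @ replicate (5 - card S0) (Min S0)"
  have "Min S0 \<in> S0" using f S(1) by simp
  then have "set xs = S0" unfolding xs_def using f by auto
  moreover have "length xs = 5" unfolding xs_def using S(3) f by simp
  ultimately show "S0 \<in> set ` {xs. set xs \<subseteq> {0..n} \<and> length xs = 5}" using S(2) by auto
qed

lemma finite_Fam: "finite (Fam n)"
  using finite_subset[OF Fam_lists] finite_lists_length_eq[of "{0..n}" 5] by blast

lemma card_Fam: "card (Fam n) \<le> (n + 1) ^ 5"
proof -
  have "card (Fam n) \<le> card (set ` {xs. set xs \<subseteq> {0..n} \<and> length xs = 5})"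
    by (rule card_mono[OF _ Fam_lists]) (simp add: finite_lists_length_eq)
  also have "\<dots> \<le> card {xs. set xs \<subseteq> {0..n::nat} \<and> length xs = 5}"
    by (rule card_image_le) (simp add: finite_lists_length_eq)
  also have "\<dots> = (n + 1) ^ 5" by (simp add: card_lists_length_eq)
  finally show ?thesis .
qed

context probset begin

lemma bad: "measure_pmf.prob M {X. \<not> Good n X} \<le> (real n + 1) ^ 5 * (1 - p ^ 31) ^ (n - 4)"
proof -
  let ?F = "\<lambda>S0. {X. \<forall>w\<in>{0..n}-S0. \<not>(\<forall>\<sigma>\<in>DD S0 w. X \<sigma>)}"
  have eq: "{X. \<not> Good n X} = (\<Union>S0\<in>Fam n. ?F S0)" unfolding Good_def by auto
  have "measure_pmf.prob M (\<Union>S0\<in>Fam n. ?F S0) \<le> (\<Sum>S0\<in>Fam n. measure_pmf.prob M (?F S0))"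
    by (rule measure_pmf.finite_measure_subadditive_finite) (auto simp: finite_Fam)
  also have "\<dots> \<le> (\<Sum>S0\<in>Fam n. (1 - p ^ 31) ^ (n - 4))"
    by (rule sum_mono) (rule prob_F)
  also have "\<dots> = real (card (Fam n)) * (1 - p ^ 31) ^ (n - 4)" by simp
  also have "\<dots> \<le> (real n + 1) ^ 5 * (1 - p ^ 31) ^ (n - 4)"
  proof (rule mult_right_mono)
    have "real (card (Fam n)) \<le> real ((n + 1) ^ 5)" using card_Fam[of n] of_nat_le_iff by blast
    then show "real (card (Fam n)) \<le> (real n + 1) ^ 5" by (simp add: add.commute)
    have "p ^ 31 \<le> 1" using p by (simp add: power_le_one)
    then show "0 \<le> (1 - p ^ 31) ^ (n - 4)" by simp
  qed
  finally show ?thesis using eq by simp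
qed

lemma good_prob:
  "measure_pmf.prob M {X. simply_connected (realization (lower_complex X))}
     \<ge> 1 - (real n + 1) ^ 5 * (1 - p ^ 31) ^ (n - 4)"
proof -
  have G1: "measure_pmf.prob M {X. Good n X} = 1 - measure_pmf.prob M {X. \<not> Good n X}"
  proof -
    have "{X. \<not> Good n X} = space (measure_pmf M) - {X. Good n X}" by auto
    then show ?thesis using measure_pmf.prob_compl[of "{X. Good n X}" M] by simp
  qed
  have G2: "measure_pmf.prob M {X. Good n X} \<le> measure_pmf.prob M {X. simply_connected (realization (lower_complex X))}"
  proof (rule measure_pmf.finite_measure_mono_AE)
    show "AE X in measure_pmf M. X \<in> {X. Good n X} \<longrightarrow> X \<in> {X. simply_connected (realization (lower_complex X))}"
    proof (rule AE_pmfI, intro impI)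
      fix X assume X: "X \<in> set_pmf M" "X \<in> {X. Good n X}"
      interpret C: cplx "lower_complex X" n using good_cplx[OF X(1)] X(2) by simp
      show "X \<in> {X. simply_connected (realization (lower_complex X))}"
        using C.simply_connected_SS unfolding C.SS_def by simp
    qed
  qed simp
  show ?thesis using bad G1 G2 by linarith
qed

end

lemma decay:
  fixes c :: real assumes c: "0 < c" "c < 1"
  shows "(\<lambda>n. (real n + 1) ^ 5 * c ^ (n - 4)) \<longlonglongrightarrow> 0"
proof -
  define d where "d = root 5 c"
  have d: "0 < d" "d < 1" "d ^ 5 = c" unfolding d_def using c by (auto simp: real_root_gt_zero)
  have "(\<lambda>m. real m * d ^ m) \<longlonglongrightarrow> 0" using d by (intro powser_times_n_limit_0) simp
  then have "(\<lambda>m. (real m * d ^ m) ^ 5) \<longlonglongrightarrow> 0 ^ 5" by (rule tendsto_power)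
  moreover have "(real m * d ^ m) ^ 5 = real m ^ 5 * c ^ m" for m
    using d(3) by (simp add: power_mult_distrib power_mult[symmetric] mult.commute[of m 5] power_mult)
  ultimately have h: "(\<lambda>m. real m ^ 5 * c ^ m) \<longlonglongrightarrow> 0" by simp
  have "(\<lambda>n. real (Suc n) ^ 5 * c ^ (Suc n) * (1 / c ^ 5)) \<longlonglongrightarrow> 0"
    by (rule tendsto_mult_left_zero) (rule LIMSEQ_Suc[OF h])
  moreover have "eventually (\<lambda>n. real (Suc n) ^ 5 * c ^ (Suc n) * (1 / c ^ 5) = (real n + 1) ^ 5 * c ^ (n - 4)) sequentially"
    unfolding eventually_sequentially
  proof (intro exI allI impI)
    fix n :: nat assume "4 \<le> n"
    then have "Suc n = (n - 4) + 5" by simp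
    then have "c ^ Suc n = c ^ (n - 4) * c ^ 5" by (metis power_add)
    then show "real (Suc n) ^ 5 * c ^ (Suc n) * (1 / c ^ 5) = (real n + 1) ^ 5 * c ^ (n - 4)"
      using c by (simp add: add.commute)
  qed
  ultimately show ?thesis by (rule Lim_transform_eventually)
qed

theorem proposition6p3:
  fixes p P :: real and q :: "nat \<Rightarrow> nat set \<Rightarrow> real"
  assumes "0 < p" and "p \<le> P" and "P < 1"
    and "\<And>n \<sigma>. \<sigma> \<in> lower_faces n \<Longrightarrow> p \<le> q n \<sigma> \<and> q n \<sigma> \<le> P"
  shows "(\<lambda>n. measure_pmf.prob (lower_hypergraph n (q n))
            {X. simply_connected (realization (lower_complex X))}) \<longlonglongrightarrow> 1"
proof -
  define c where "c = 1 - p ^ 31"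
  have p1: "p < 1" using assms(2,3) by simp
  have c: "0 < c" "c < 1" unfolding c_def using assms(1) p1
    by (auto simp: power_less_one_iff power_strict_decreasing_iff)
  have ps: "probset p (q n) n" if "6 \<le> n" for n
    using assms that p1 by unfold_locales (auto intro: order_trans[of _ P 1])
  have lo: "eventually (\<lambda>n. 1 - (real n + 1) ^ 5 * c ^ (n - 4) \<le>
      measure_pmf.prob (lower_hypergraph n (q n)) {X. simply_connected (realization (lower_complex X))}) sequentially"
    unfolding eventually_sequentially c_def using probset.good_prob[OF ps] by blast
  have hi: "eventually (\<lambda>n. measure_pmf.prob (lower_hypergraph n (q n))
      {X. simply_connected (realization (lower_complex X))} \<le> 1) sequentially"
    by (simp add: measure_pmf.prob_le_1)
  have "(\<lambda>n. 1 - (real n + 1) ^ 5 * c ^ (n - 4)) \<longlonglongrightarrow> 1 - 0"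
    by (intro tendsto_diff tendsto_const decay c)
  then show ?thesis using lo hi by (intro tendsto_sandwich[OF lo hi]) auto
qed

end
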